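(* Let $\mathcal{O}$ be a strict monoidal category and $\mathcal{B}$ a strict left $\mathcal{O}$-module category. Then the category $\bar{\mathcal{O}}_{\triangleright\mathcal{B}}$ is a monoidal category with respect to the tensor product equal to that of $\mathcal{O}$ on objects and defined on morphisms by $$(\phi\bar\otimes\psi)_X:=(\mathrm{id}_C\otimes\psi_X)\circ\phi_{B\otimes X}=\phi_{D\otimes X}\circ(\mathrm{id}_A\otimes\psi_X)$$ for $\phi\in\mathrm{Hom}_{\bar{\mathcal{O}}_{\triangleright\mathcal{B}}}(A,C)$, $\psi\in\mathrm{Hom}_{\bar{\mathcal{O}}_{\triangleright\mathcal{B}}}(B,D)$, $X\in\mathrm{Ob}\,\mathcal{B}$.
   Context: The action of $\mathcal{O}$ on $\mathcal{B}$ and the tensor product of $\mathcal{O}$ are both written $\otimes$ (with trivial associativity constraints). $\bar{\mathcal{O}}_{\triangleright\mathcal{B}}$ has the objects of $\mathcal{O}$; a morphism $\phi\colon A\to B$ is a family $\{\phi_X\}_{X\in\mathrm{Ob}\,\mathcal{B}}$ of morphisms $\phi_X\in\mathrm{Hom}_\mathcal{B}(A\otimes X,B\otimes X)$ such that $\phi_X\circ(\mathrm{id}_A\otimes\xi)=(\mathrm{id}_B\otimes\xi)\circ\phi_{X'}$ for all $\xi\in\mathrm{Hom}_\mathcal{B}(X',X)$; composition is pointwise, $(\phi\circ\psi)_X=\phi_X\circ\psi_X$. *)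

theory Defs
  imports Main
begin

definition category ::
  "'o set \<Rightarrow> ('o \<Rightarrow> 'o \<Rightarrow> 'm set) \<Rightarrow> ('m \<Rightarrow> 'm \<Rightarrow> 'm) \<Rightarrow> ('o \<Rightarrow> 'm) \<Rightarrow> bool" where
  "category Ob Hom cmp idm \<longleftrightarrow>
     (\<forall>A\<in>Ob. idm A \<in> Hom A A) \<and>
     (\<forall>A\<in>Ob. \<forall>B\<in>Ob. \<forall>C\<in>Ob. \<forall>f\<in>Hom A B. \<forall>g\<in>Hom B C. cmp g f \<in> Hom A C) \<and>
     (\<forall>A\<in>Ob. \<forall>B\<in>Ob. \<forall>f\<in>Hom A B. cmp f (idm A) = f \<and> cmp (idm B) f = f) \<and>
     (\<forall>A\<in>Ob. \<forall>B\<in>Ob. \<forall>C\<in>Ob. \<forall>D\<in>Ob. \<forall>f\<in>Hom A B. \<forall>g\<in>Hom B C. \<forall>h\<in>Hom C D.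
        cmp h (cmp g f) = cmp (cmp h g) f)"

definition strict_monoidal ::
  "'o set \<Rightarrow> ('o \<Rightarrow> 'o \<Rightarrow> 'm set) \<Rightarrow> ('m \<Rightarrow> 'm \<Rightarrow> 'm) \<Rightarrow> ('o \<Rightarrow> 'm)
   \<Rightarrow> ('o \<Rightarrow> 'o \<Rightarrow> 'o) \<Rightarrow> ('m \<Rightarrow> 'm \<Rightarrow> 'm) \<Rightarrow> 'o \<Rightarrow> bool" where
  "strict_monoidal Ob Hom cmp idm tens tensm I \<longleftrightarrow>
     category Ob Hom cmp idm \<and> I \<in> Ob \<and>
     (\<forall>A\<in>Ob. \<forall>B\<in>Ob. tens A B \<in> Ob) \<and>
     (\<forall>A\<in>Ob. \<forall>B\<in>Ob. \<forall>C\<in>Ob. \<forall>D\<in>Ob. \<forall>f\<in>Hom A C. \<forall>g\<in>Hom B D.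
        tensm f g \<in> Hom (tens A B) (tens C D)) \<and>
     (\<forall>A\<in>Ob. \<forall>B\<in>Ob. tensm (idm A) (idm B) = idm (tens A B)) \<and>
     (\<forall>A\<in>Ob. \<forall>B\<in>Ob. \<forall>C\<in>Ob. \<forall>D\<in>Ob. \<forall>E\<in>Ob. \<forall>F\<in>Ob.
        \<forall>f\<in>Hom A C. \<forall>f'\<in>Hom C E. \<forall>g\<in>Hom B D. \<forall>g'\<in>Hom D F.
        tensm (cmp f' f) (cmp g' g) = cmp (tensm f' g') (tensm f g)) \<and>
     (\<forall>A\<in>Ob. \<forall>B\<in>Ob. \<forall>C\<in>Ob. tens (tens A B) C = tens A (tens B C)) \<and>
     (\<forall>A\<in>Ob. tens I A = A \<and> tens A I = A) \<and>
     (\<forall>A\<in>Ob. \<forall>A'\<in>Ob. \<forall>B\<in>Ob. \<forall>B'\<in>Ob. \<forall>C\<in>Ob. \<forall>C'\<in>Ob.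
        \<forall>f\<in>Hom A A'. \<forall>g\<in>Hom B B'. \<forall>h\<in>Hom C C'.
        tensm (tensm f g) h = tensm f (tensm g h)) \<and>
     (\<forall>A\<in>Ob. \<forall>B\<in>Ob. \<forall>f\<in>Hom A B. tensm (idm I) f = f \<and> tensm f (idm I) = f)"

definition strict_left_module ::
  "'o set \<Rightarrow> ('o \<Rightarrow> 'o \<Rightarrow> 'm set) \<Rightarrow> ('m \<Rightarrow> 'm \<Rightarrow> 'm) \<Rightarrow> ('o \<Rightarrow> 'm)
   \<Rightarrow> ('o \<Rightarrow> 'o \<Rightarrow> 'o) \<Rightarrow> ('m \<Rightarrow> 'm \<Rightarrow> 'm) \<Rightarrow> 'o
   \<Rightarrow> 'b set \<Rightarrow> ('b \<Rightarrow> 'b \<Rightarrow> 'n set) \<Rightarrow> ('n \<Rightarrow> 'n \<Rightarrow> 'n) \<Rightarrow> ('b \<Rightarrow> 'n)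
   \<Rightarrow> ('o \<Rightarrow> 'b \<Rightarrow> 'b) \<Rightarrow> ('m \<Rightarrow> 'n \<Rightarrow> 'n) \<Rightarrow> bool" where
  "strict_left_module ObO HomO compO idO tensO tensmO I ObB HomB compB idB act actm \<longleftrightarrow>
     strict_monoidal ObO HomO compO idO tensO tensmO I \<and>
     category ObB HomB compB idB \<and>
     (\<forall>A\<in>ObO. \<forall>X\<in>ObB. act A X \<in> ObB) \<and>
     (\<forall>A\<in>ObO. \<forall>C\<in>ObO. \<forall>X\<in>ObB. \<forall>Y\<in>ObB. \<forall>f\<in>HomO A C. \<forall>\<xi>\<in>HomB X Y.
        actm f \<xi> \<in> HomB (act A X) (act C Y)) \<and>
     (\<forall>A\<in>ObO. \<forall>X\<in>ObB. actm (idO A) (idB X) = idB (act A X)) \<and>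
     (\<forall>A\<in>ObO. \<forall>C\<in>ObO. \<forall>E\<in>ObO. \<forall>X\<in>ObB. \<forall>Y\<in>ObB. \<forall>Z\<in>ObB.
        \<forall>f\<in>HomO A C. \<forall>f'\<in>HomO C E. \<forall>\<xi>\<in>HomB X Y. \<forall>\<xi>'\<in>HomB Y Z.
        actm (compO f' f) (compB \<xi>' \<xi>) = compB (actm f' \<xi>') (actm f \<xi>)) \<and>
     (\<forall>A\<in>ObO. \<forall>B\<in>ObO. \<forall>X\<in>ObB. act (tensO A B) X = act A (act B X)) \<and>
     (\<forall>X\<in>ObB. act I X = X) \<and>
     (\<forall>A\<in>ObO. \<forall>A'\<in>ObO. \<forall>B\<in>ObO. \<forall>B'\<in>ObO. \<forall>X\<in>ObB. \<forall>X'\<in>ObB.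
        \<forall>f\<in>HomO A A'. \<forall>g\<in>HomO B B'. \<forall>\<xi>\<in>HomB X X'.
        actm (tensmO f g) \<xi> = actm f (actm g \<xi>)) \<and>
     (\<forall>X\<in>ObB. \<forall>Y\<in>ObB. \<forall>\<xi>\<in>HomB X Y. actm (idO I) \<xi> = \<xi>)"

text \<open>A morphism A \<rightarrow> C is represented as the triple (A, C, \<phi>)
  where \<phi> is the family (\<phi>_X)_{X \<in> Ob B}, extended by undefined outside Ob B.\<close>
definition barHom ::
  "'b set \<Rightarrow> ('b \<Rightarrow> 'b \<Rightarrow> 'n set) \<Rightarrow> ('n \<Rightarrow> 'n \<Rightarrow> 'n) \<Rightarrow> ('o \<Rightarrow> 'm)
   \<Rightarrow> ('o \<Rightarrow> 'b \<Rightarrow> 'b) \<Rightarrow> ('m \<Rightarrow> 'n \<Rightarrow> 'n) \<Rightarrow> 'o \<Rightarrow> 'o \<Rightarrow> ('o \<times> 'o \<times> ('b \<Rightarrow> 'n)) set" where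
  "barHom ObB HomB compB idO act actm A C =
     {(A, C, \<phi>) | \<phi>.
        (\<forall>X\<in>ObB. \<phi> X \<in> HomB (act A X) (act C X)) \<and>
        (\<forall>X\<in>ObB. \<forall>X'\<in>ObB. \<forall>\<xi>\<in>HomB X' X.
           compB (\<phi> X) (actm (idO A) \<xi>) = compB (actm (idO C) \<xi>) (\<phi> X')) \<and>
        (\<forall>X. X \<notin> ObB \<longrightarrow> \<phi> X = undefined)}"

definition barComp ::
  "'b set \<Rightarrow> ('n \<Rightarrow> 'n \<Rightarrow> 'n)
   \<Rightarrow> ('o \<times> 'o \<times> ('b \<Rightarrow> 'n)) \<Rightarrow> ('o \<times> 'o \<times> ('b \<Rightarrow> 'n)) \<Rightarrow> ('o \<times> 'o \<times> ('b \<Rightarrow> 'n))" where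
  "barComp ObB compB f g =
     (fst g, fst (snd f),
      \<lambda>X. if X \<in> ObB then compB (snd (snd f) X) (snd (snd g) X) else undefined)"

definition barId ::
  "'b set \<Rightarrow> ('b \<Rightarrow> 'n) \<Rightarrow> ('o \<Rightarrow> 'b \<Rightarrow> 'b) \<Rightarrow> 'o \<Rightarrow> ('o \<times> 'o \<times> ('b \<Rightarrow> 'n))" where
  "barId ObB idB act A = (A, A, \<lambda>X. if X \<in> ObB then idB (act A X) else undefined)"

definition barTens ::
  "'b set \<Rightarrow> ('n \<Rightarrow> 'n \<Rightarrow> 'n) \<Rightarrow> ('o \<Rightarrow> 'm) \<Rightarrow> ('o \<Rightarrow> 'o \<Rightarrow> 'o)
   \<Rightarrow> ('o \<Rightarrow> 'b \<Rightarrow> 'b) \<Rightarrow> ('m \<Rightarrow> 'n \<Rightarrow> 'n)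
   \<Rightarrow> ('o \<times> 'o \<times> ('b \<Rightarrow> 'n)) \<Rightarrow> ('o \<times> 'o \<times> ('b \<Rightarrow> 'n)) \<Rightarrow> ('o \<times> 'o \<times> ('b \<Rightarrow> 'n))" where
  "barTens ObB compB idO tensO act actm f g =
     (case f of (A, C, \<phi>) \<Rightarrow> case g of (B, D, \<psi>) \<Rightarrow>
       (tensO A B, tensO C D,
        \<lambda>X. if X \<in> ObB then compB (actm (idO C) (\<psi> X)) (\<phi> (act B X)) else undefined))"

end

theory Submission
  imports Defs
begin

context
  fixes ObO :: "'o set" and HomO :: "'o \<Rightarrow> 'o \<Rightarrow> 'm set" and compO :: "'m \<Rightarrow> 'm \<Rightarrow> 'm"
    and idO :: "'o \<Rightarrow> 'm" and tensO :: "'o \<Rightarrow> 'o \<Rightarrow> 'o" and tensmO :: "'m \<Rightarrow> 'm \<Rightarrow> 'm"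
    and I :: 'o
    and ObB :: "'b set" and HomB :: "'b \<Rightarrow> 'b \<Rightarrow> 'n set" and compB :: "'n \<Rightarrow> 'n \<Rightarrow> 'n"
    and idB :: "'b \<Rightarrow> 'n" and act :: "'o \<Rightarrow> 'b \<Rightarrow> 'b" and actm :: "'m \<Rightarrow> 'n \<Rightarrow> 'n"
  assumes SLM: "strict_left_module ObO HomO compO idO tensO tensmO I ObB HomB compB idB act actm"
begin

lemma SM: "strict_monoidal ObO HomO compO idO tensO tensmO I"
  using SLM unfolding strict_left_module_def by (elim conjE) (blast | simp)
lemma CO: "category ObO HomO compO idO"
  using SM unfolding strict_monoidal_def by (elim conjE) (blast | simp)
lemma CB: "category ObB HomB compB idB"
  using SLM unfolding strict_left_module_def by (elim conjE) (blast | simp)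

lemma O_id: "A \<in> ObO \<Longrightarrow> idO A \<in> HomO A A"
  using CO unfolding category_def by (elim conjE) (blast | simp)
lemma O_idid: "A \<in> ObO \<Longrightarrow> compO (idO A) (idO A) = idO A"
  using CO O_id unfolding category_def by (elim conjE) (blast | simp)
lemma I_ob: "I \<in> ObO" using SM unfolding strict_monoidal_def by (elim conjE) (blast | simp)
lemma O_tens_ob: "A \<in> ObO \<Longrightarrow> B \<in> ObO \<Longrightarrow> tensO A B \<in> ObO"
  using SM unfolding strict_monoidal_def by (elim conjE) (blast | simp)
lemma O_tensm_id: "A \<in> ObO \<Longrightarrow> B \<in> ObO \<Longrightarrow> tensmO (idO A) (idO B) = idO (tensO A B)"
  using SM unfolding strict_monoidal_def by (elim conjE) (blast | simp)
lemma O_assoc_ob: "A \<in> ObO \<Longrightarrow> B \<in> ObO \<Longrightarrow> C \<in> ObO \<Longrightarrow> tensO (tensO A B) C = tensO A (tensO B C)"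
  using SM unfolding strict_monoidal_def by (elim conjE) (blast | simp)
lemma O_unitL: "A \<in> ObO \<Longrightarrow> tensO I A = A"
  using SM unfolding strict_monoidal_def by (elim conjE) (blast | simp)
lemma O_unitR: "A \<in> ObO \<Longrightarrow> tensO A I = A"
  using SM unfolding strict_monoidal_def by (elim conjE) (blast | simp)

lemma B_id: "X \<in> ObB \<Longrightarrow> idB X \<in> HomB X X"
  using CB unfolding category_def by (elim conjE) (blast | simp)
lemma B_comp: "X \<in> ObB \<Longrightarrow> Y \<in> ObB \<Longrightarrow> Z \<in> ObB \<Longrightarrow> f \<in> HomB X Y \<Longrightarrow> g \<in> HomB Y Z
   \<Longrightarrow> compB g f \<in> HomB X Z"
  using CB unfolding category_def by (elim conjE) (blast | simp)
lemma B_idR: "X \<in> ObB \<Longrightarrow> Y \<in> ObB \<Longrightarrow> f \<in> HomB X Y \<Longrightarrow> compB f (idB X) = f"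
  using CB unfolding category_def by (elim conjE) (blast | simp)
lemma B_idL: "X \<in> ObB \<Longrightarrow> Y \<in> ObB \<Longrightarrow> f \<in> HomB X Y \<Longrightarrow> compB (idB Y) f = f"
  using CB unfolding category_def by (elim conjE) (blast | simp)
lemma B_assoc: "X \<in> ObB \<Longrightarrow> Y \<in> ObB \<Longrightarrow> Z \<in> ObB \<Longrightarrow> W \<in> ObB \<Longrightarrow> f \<in> HomB X Y \<Longrightarrow> g \<in> HomB Y Z
   \<Longrightarrow> h \<in> HomB Z W \<Longrightarrow> compB h (compB g f) = compB (compB h g) f"
  using CB unfolding category_def by (elim conjE) (blast | simp)

lemma act_ob: "A \<in> ObO \<Longrightarrow> X \<in> ObB \<Longrightarrow> act A X \<in> ObB"
  using SLM unfolding strict_left_module_def by (elim conjE) (blast | simp)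
lemma actm_hom: "A \<in> ObO \<Longrightarrow> C \<in> ObO \<Longrightarrow> X \<in> ObB \<Longrightarrow> Y \<in> ObB \<Longrightarrow> f \<in> HomO A C \<Longrightarrow> \<xi> \<in> HomB X Y
   \<Longrightarrow> actm f \<xi> \<in> HomB (act A X) (act C Y)"
  using SLM unfolding strict_left_module_def by (elim conjE) (blast | simp)
lemma actm_id: "A \<in> ObO \<Longrightarrow> X \<in> ObB \<Longrightarrow> actm (idO A) (idB X) = idB (act A X)"
  using SLM unfolding strict_left_module_def by (elim conjE) (blast | simp)
lemma actm_comp: "A \<in> ObO \<Longrightarrow> C \<in> ObO \<Longrightarrow> E \<in> ObO \<Longrightarrow> X \<in> ObB \<Longrightarrow> Y \<in> ObB \<Longrightarrow> Z \<in> ObB \<Longrightarrow>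
   f \<in> HomO A C \<Longrightarrow> f' \<in> HomO C E \<Longrightarrow> \<xi> \<in> HomB X Y \<Longrightarrow> \<xi>' \<in> HomB Y Z \<Longrightarrow>
   actm (compO f' f) (compB \<xi>' \<xi>) = compB (actm f' \<xi>') (actm f \<xi>)"
  using SLM unfolding strict_left_module_def by (elim conjE) (blast | simp)
lemma act_tens: "A \<in> ObO \<Longrightarrow> B \<in> ObO \<Longrightarrow> X \<in> ObB \<Longrightarrow> act (tensO A B) X = act A (act B X)"
  using SLM unfolding strict_left_module_def by (elim conjE) (blast | simp)
lemma act_I: "X \<in> ObB \<Longrightarrow> act I X = X"
  using SLM unfolding strict_left_module_def by (elim conjE) (blast | simp)
lemma actm_tens: "A \<in> ObO \<Longrightarrow> A' \<in> ObO \<Longrightarrow> B \<in> ObO \<Longrightarrow> B' \<in> ObO \<Longrightarrow> X \<in> ObB \<Longrightarrow> X' \<in> ObB \<Longrightarrow>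
   f \<in> HomO A A' \<Longrightarrow> g \<in> HomO B B' \<Longrightarrow> \<xi> \<in> HomB X X' \<Longrightarrow> actm (tensmO f g) \<xi> = actm f (actm g \<xi>)"
  using SLM unfolding strict_left_module_def by (elim conjE) (blast | simp)
lemma actm_I: "X \<in> ObB \<Longrightarrow> Y \<in> ObB \<Longrightarrow> \<xi> \<in> HomB X Y \<Longrightarrow> actm (idO I) \<xi> = \<xi>"
  using SLM unfolding strict_left_module_def by (elim conjE) (blast | simp)

lemma aid_hom: "A \<in> ObO \<Longrightarrow> X \<in> ObB \<Longrightarrow> Y \<in> ObB \<Longrightarrow> \<xi> \<in> HomB X Y
   \<Longrightarrow> actm (idO A) \<xi> \<in> HomB (act A X) (act A Y)"
  by (rule actm_hom) (auto intro: O_id)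
lemma aid_comp: "A \<in> ObO \<Longrightarrow> X \<in> ObB \<Longrightarrow> Y \<in> ObB \<Longrightarrow> Z \<in> ObB \<Longrightarrow> \<xi> \<in> HomB X Y \<Longrightarrow> \<xi>' \<in> HomB Y Z \<Longrightarrow>
   actm (idO A) (compB \<xi>' \<xi>) = compB (actm (idO A) \<xi>') (actm (idO A) \<xi>)"
  using actm_comp[of A A A X Y Z "idO A" "idO A" \<xi> \<xi>'] O_id O_idid by simp
lemma aid_tens: "A \<in> ObO \<Longrightarrow> B \<in> ObO \<Longrightarrow> X \<in> ObB \<Longrightarrow> X' \<in> ObB \<Longrightarrow> \<xi> \<in> HomB X X' \<Longrightarrow>
   actm (idO (tensO A B)) \<xi> = actm (idO A) (actm (idO B) \<xi>)"
  using actm_tens[of A A B B X X' "idO A" "idO B" \<xi>] O_id O_tensm_id by simp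

abbreviation "H \<equiv> barHom ObB HomB compB idO act actm"

lemma H_iff: "(A', C', \<phi>) \<in> H A C \<longleftrightarrow> A' = A \<and> C' = C \<and>
        (\<forall>X\<in>ObB. \<phi> X \<in> HomB (act A X) (act C X)) \<and>
        (\<forall>X\<in>ObB. \<forall>X'\<in>ObB. \<forall>\<xi>\<in>HomB X' X.
           compB (\<phi> X) (actm (idO A) \<xi>) = compB (actm (idO C) \<xi>) (\<phi> X')) \<and>
        (\<forall>X. X \<notin> ObB \<longrightarrow> \<phi> X = undefined)"
  unfolding barHom_def by auto

lemma H_elim:
  assumes "f \<in> H A C"
  obtains \<phi> where "f = (A, C, \<phi>)" "\<And>X. X \<in> ObB \<Longrightarrow> \<phi> X \<in> HomB (act A X) (act C X)"
    "\<And>X X' \<xi>. X \<in> ObB \<Longrightarrow> X' \<in> ObB \<Longrightarrow> \<xi> \<in> HomB X' X \<Longrightarrow>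
           compB (\<phi> X) (actm (idO A) \<xi>) = compB (actm (idO C) \<xi>) (\<phi> X')"
    "\<And>X. X \<notin> ObB \<Longrightarrow> \<phi> X = undefined"
proof -
  from assms obtain \<phi> where f: "f = (A, C, \<phi>)" and "(A, C, \<phi>) \<in> H A C"
    unfolding barHom_def by auto
  then show ?thesis using that unfolding H_iff by blast
qed

lemma part1:
  assumes "A \<in> ObO" "B \<in> ObO" "C \<in> ObO" "D \<in> ObO"
    "(A, C, \<phi>) \<in> H A C" "(B, D, \<psi>) \<in> H B D" "X \<in> ObB"
  shows "compB (actm (idO C) (\<psi> X)) (\<phi> (act B X)) = compB (\<phi> (act D X)) (actm (idO A) (\<psi> X))"
proof -
  have p: "\<psi> X \<in> HomB (act B X) (act D X)" using assms(6,7) unfolding H_iff by blast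
  have n: "\<forall>X\<in>ObB. \<forall>X'\<in>ObB. \<forall>\<xi>\<in>HomB X' X.
           compB (\<phi> X) (actm (idO A) \<xi>) = compB (actm (idO C) \<xi>) (\<phi> X')"
    using assms(5) unfolding H_iff by blast
  show ?thesis using n p act_ob assms by metis
qed

lemma bar_id_hom: "A \<in> ObO \<Longrightarrow> barId ObB idB act A \<in> H A A"
  unfolding barId_def H_iff
proof (intro conjI ballI allI impI refl)
  fix X X' \<xi> assume A: "A \<in> ObO" and X: "X \<in> ObB" and X': "X' \<in> ObB" and xi: "\<xi> \<in> HomB X' X"
  have h: "actm (idO A) \<xi> \<in> HomB (act A X') (act A X)" using aid_hom A X X' xi by blast
  show "compB (if X \<in> ObB then idB (act A X) else undefined) (actm (idO A) \<xi>) =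
       compB (actm (idO A) \<xi>) (if X' \<in> ObB then idB (act A X') else undefined)"
    using X X' B_idL[OF act_ob[OF A X'] act_ob[OF A X] h] B_idR[OF act_ob[OF A X'] act_ob[OF A X] h] by simp
qed (auto simp: B_id act_ob)

lemma bar_comp_hom:
  assumes "A \<in> ObO" "B \<in> ObO" "C \<in> ObO" "f \<in> H A B" "g \<in> H B C"
  shows "barComp ObB compB g f \<in> H A C"
proof -
  obtain \<phi> where f: "f = (A, B, \<phi>)" and ph: "\<And>X. X \<in> ObB \<Longrightarrow> \<phi> X \<in> HomB (act A X) (act B X)"
    and pn: "\<And>X X' \<xi>. X \<in> ObB \<Longrightarrow> X' \<in> ObB \<Longrightarrow> \<xi> \<in> HomB X' X \<Longrightarrow>
           compB (\<phi> X) (actm (idO A) \<xi>) = compB (actm (idO B) \<xi>) (\<phi> X')"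
    using H_elim[OF assms(4)] by metis
  obtain \<psi> where g: "g = (B, C, \<psi>)" and sh: "\<And>X. X \<in> ObB \<Longrightarrow> \<psi> X \<in> HomB (act B X) (act C X)"
    and sn: "\<And>X X' \<xi>. X \<in> ObB \<Longrightarrow> X' \<in> ObB \<Longrightarrow> \<xi> \<in> HomB X' X \<Longrightarrow>
           compB (\<psi> X) (actm (idO B) \<xi>) = compB (actm (idO C) \<xi>) (\<psi> X')"
    using H_elim[OF assms(5)] by metis
  have e: "barComp ObB compB g f = (A, C, \<lambda>X. if X \<in> ObB then compB (\<psi> X) (\<phi> X) else undefined)"
    unfolding f g barComp_def by (simp only: prod.sel)
  show ?thesis unfolding e H_iff
  proof (intro conjI ballI allI impI refl)
    fix X assume X: "X \<in> ObB"
    show "(if X \<in> ObB then compB (\<psi> X) (\<phi> X) else undefined) \<in> HomB (act A X) (act C X)"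
      using X B_comp[OF act_ob act_ob act_ob ph sh] assms by simp
  next
    fix X X' \<xi> assume X: "X \<in> ObB" and X': "X' \<in> ObB" and xi: "\<xi> \<in> HomB X' X"
    have hA: "actm (idO A) \<xi> \<in> HomB (act A X') (act A X)" using aid_hom assms X X' xi by blast
    have hB: "actm (idO B) \<xi> \<in> HomB (act B X') (act B X)" using aid_hom assms X X' xi by blast
    have hC: "actm (idO C) \<xi> \<in> HomB (act C X') (act C X)" using aid_hom assms X X' xi by blast
    have o: "act A X \<in> ObB" "act B X \<in> ObB" "act C X \<in> ObB" "act A X' \<in> ObB" "act B X' \<in> ObB" "act C X' \<in> ObB"
      using act_ob assms X X' by auto
    have "compB (compB (\<psi> X) (\<phi> X)) (actm (idO A) \<xi>) = compB (\<psi> X) (compB (\<phi> X) (actm (idO A) \<xi>))"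
      using B_assoc[OF o(4) o(1) o(2) o(3) hA ph[OF X] sh[OF X]] by simp
    also have "\<dots> = compB (\<psi> X) (compB (actm (idO B) \<xi>) (\<phi> X'))" using pn X X' xi by simp
    also have "\<dots> = compB (compB (\<psi> X) (actm (idO B) \<xi>)) (\<phi> X')"
      using B_assoc[OF o(4) o(5) o(2) o(3) ph[OF X'] hB sh[OF X]] by simp
    also have "\<dots> = compB (compB (actm (idO C) \<xi>) (\<psi> X')) (\<phi> X')" using sn X X' xi by simp
    also have "\<dots> = compB (actm (idO C) \<xi>) (compB (\<psi> X') (\<phi> X'))"
      using B_assoc[OF o(4) o(5) o(6) o(3) ph[OF X'] sh[OF X'] hC] by simp
    finally show "compB (if X \<in> ObB then compB (\<psi> X) (\<phi> X) else undefined) (actm (idO A) \<xi>) =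
       compB (actm (idO C) \<xi>) (if X' \<in> ObB then compB (\<psi> X') (\<phi> X') else undefined)"
      using X X' by simp
  next
    fix X assume "X \<notin> ObB"
    then show "(if X \<in> ObB then compB (\<psi> X) (\<phi> X) else undefined) = undefined" by simp
  qed
qed

lemma bar_idR:
  assumes "A \<in> ObO" "B \<in> ObO" "f \<in> H A B"
  shows "barComp ObB compB f (barId ObB idB act A) = f"
proof -
  obtain \<phi> where f: "f = (A, B, \<phi>)" and ph: "\<And>X. X \<in> ObB \<Longrightarrow> \<phi> X \<in> HomB (act A X) (act B X)"
    and pu: "\<And>X. X \<notin> ObB \<Longrightarrow> \<phi> X = undefined"
    using H_elim[OF assms(3)] by metis
  have e: "(\<lambda>X. if X \<in> ObB then compB (\<phi> X) (if X \<in> ObB then idB (act A X) else undefined) else undefined) = \<phi>"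
  proof
    fix X show "(if X \<in> ObB then compB (\<phi> X) (if X \<in> ObB then idB (act A X) else undefined) else undefined) = \<phi> X"
      using B_idR[OF act_ob act_ob ph] pu assms by (cases "X \<in> ObB") auto
  qed
  show ?thesis unfolding f barComp_def barId_def prod.sel e ..
qed

lemma bar_idL:
  assumes "A \<in> ObO" "B \<in> ObO" "f \<in> H A B"
  shows "barComp ObB compB (barId ObB idB act B) f = f"
proof -
  obtain \<phi> where f: "f = (A, B, \<phi>)" and ph: "\<And>X. X \<in> ObB \<Longrightarrow> \<phi> X \<in> HomB (act A X) (act B X)"
    and pu: "\<And>X. X \<notin> ObB \<Longrightarrow> \<phi> X = undefined"
    using H_elim[OF assms(3)] by metis
  have e: "(\<lambda>X. if X \<in> ObB then compB (if X \<in> ObB then idB (act B X) else undefined) (\<phi> X) else undefined) = \<phi>"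
  proof
    fix X show "(if X \<in> ObB then compB (if X \<in> ObB then idB (act B X) else undefined) (\<phi> X) else undefined) = \<phi> X"
      using B_idL[OF act_ob act_ob ph] pu assms by (cases "X \<in> ObB") auto
  qed
  show ?thesis unfolding f barComp_def barId_def prod.sel e ..
qed

lemma bar_assoc:
  assumes "A \<in> ObO" "B \<in> ObO" "C \<in> ObO" "D \<in> ObO" "f \<in> H A B" "g \<in> H B C" "h \<in> H C D"
  shows "barComp ObB compB h (barComp ObB compB g f) = barComp ObB compB (barComp ObB compB h g) f"
proof -
  obtain \<phi> where f: "f = (A, B, \<phi>)" and ph: "\<And>X. X \<in> ObB \<Longrightarrow> \<phi> X \<in> HomB (act A X) (act B X)"
    using H_elim[OF assms(5)] by metis
  obtain \<psi> where g: "g = (B, C, \<psi>)" and sh: "\<And>X. X \<in> ObB \<Longrightarrow> \<psi> X \<in> HomB (act B X) (act C X)"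
    using H_elim[OF assms(6)] by metis
  obtain \<chi> where h: "h = (C, D, \<chi>)" and ch: "\<And>X. X \<in> ObB \<Longrightarrow> \<chi> X \<in> HomB (act C X) (act D X)"
    using H_elim[OF assms(7)] by metis
  have e: "(\<lambda>X. if X \<in> ObB then compB (\<chi> X) (if X \<in> ObB then compB (\<psi> X) (\<phi> X) else undefined) else undefined)
      = (\<lambda>X. if X \<in> ObB then compB (if X \<in> ObB then compB (\<chi> X) (\<psi> X) else undefined) (\<phi> X) else undefined)"
  proof
    fix X show "(if X \<in> ObB then compB (\<chi> X) (if X \<in> ObB then compB (\<psi> X) (\<phi> X) else undefined) else undefined)
      = (if X \<in> ObB then compB (if X \<in> ObB then compB (\<chi> X) (\<psi> X) else undefined) (\<phi> X) else undefined)"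
      using B_assoc[OF act_ob act_ob act_ob act_ob ph sh ch] assms by (cases "X \<in> ObB") auto
  qed
  show ?thesis unfolding f g h barComp_def prod.sel e ..
qed

lemma bar_tens_hom:
  assumes "A \<in> ObO" "B \<in> ObO" "C \<in> ObO" "D \<in> ObO" "f \<in> H A C" "g \<in> H B D"
  shows "barTens ObB compB idO tensO act actm f g \<in> H (tensO A B) (tensO C D)"
proof -
  obtain \<phi> where f: "f = (A, C, \<phi>)" and ph: "\<And>X. X \<in> ObB \<Longrightarrow> \<phi> X \<in> HomB (act A X) (act C X)"
    and pn: "\<And>X X' \<xi>. X \<in> ObB \<Longrightarrow> X' \<in> ObB \<Longrightarrow> \<xi> \<in> HomB X' X \<Longrightarrow>
           compB (\<phi> X) (actm (idO A) \<xi>) = compB (actm (idO C) \<xi>) (\<phi> X')"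
    using H_elim[OF assms(5)] by metis
  obtain \<psi> where g: "g = (B, D, \<psi>)" and sh: "\<And>X. X \<in> ObB \<Longrightarrow> \<psi> X \<in> HomB (act B X) (act D X)"
    and sn: "\<And>X X' \<xi>. X \<in> ObB \<Longrightarrow> X' \<in> ObB \<Longrightarrow> \<xi> \<in> HomB X' X \<Longrightarrow>
           compB (\<psi> X) (actm (idO B) \<xi>) = compB (actm (idO D) \<xi>) (\<psi> X')"
    using H_elim[OF assms(6)] by metis
  have e: "barTens ObB compB idO tensO act actm f g = (tensO A B, tensO C D,
     \<lambda>X. if X \<in> ObB then compB (actm (idO C) (\<psi> X)) (\<phi> (act B X)) else undefined)"
    unfolding f g barTens_def prod.case ..
  show ?thesis unfolding e H_iff
  proof (intro conjI ballI allI impI refl)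
    fix X assume X: "X \<in> ObB"
    have "compB (actm (idO C) (\<psi> X)) (\<phi> (act B X)) \<in> HomB (act A (act B X)) (act C (act D X))"
    proof -
      have o: "act B X \<in> ObB" "act D X \<in> ObB" using act_ob assms X by auto
      have pX: "actm (idO C) (\<psi> X) \<in> HomB (act C (act B X)) (act C (act D X))"
        using aid_hom[OF _ o(1) o(2) sh[OF X]] assms by blast
      show ?thesis using B_comp[OF act_ob act_ob act_ob ph[OF o(1)] pX] assms o by blast
    qed
    then show "(if X \<in> ObB then compB (actm (idO C) (\<psi> X)) (\<phi> (act B X)) else undefined)
        \<in> HomB (act (tensO A B) X) (act (tensO C D) X)"
      using X act_tens assms by simp
  next
    fix X X' \<xi> assume X: "X \<in> ObB" and X': "X' \<in> ObB" and xi: "\<xi> \<in> HomB X' X"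
    have o: "act B X \<in> ObB" "act D X \<in> ObB" "act B X' \<in> ObB" "act D X' \<in> ObB"
      "act A (act B X) \<in> ObB" "act C (act B X) \<in> ObB" "act C (act D X) \<in> ObB"
      "act A (act B X') \<in> ObB" "act C (act B X') \<in> ObB" "act C (act D X') \<in> ObB"
      using act_ob assms X X' by auto
    have hB: "actm (idO B) \<xi> \<in> HomB (act B X') (act B X)" using aid_hom assms X X' xi by blast
    have hD: "actm (idO D) \<xi> \<in> HomB (act D X') (act D X)" using aid_hom assms X X' xi by blast
    have hAB: "actm (idO A) (actm (idO B) \<xi>) \<in> HomB (act A (act B X')) (act A (act B X))"
      using aid_hom[OF _ o(3) o(1) hB] assms by blast
    have hCB: "actm (idO C) (actm (idO B) \<xi>) \<in> HomB (act C (act B X')) (act C (act B X))"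
      using aid_hom[OF _ o(3) o(1) hB] assms by blast
    have hCD: "actm (idO C) (actm (idO D) \<xi>) \<in> HomB (act C (act D X')) (act C (act D X))"
      using aid_hom[OF _ o(4) o(2) hD] assms by blast
    have pX: "actm (idO C) (\<psi> X) \<in> HomB (act C (act B X)) (act C (act D X))"
      using aid_hom[OF _ o(1) o(2) sh[OF X]] assms by blast
    have pX': "actm (idO C) (\<psi> X') \<in> HomB (act C (act B X')) (act C (act D X'))"
      using aid_hom[OF _ o(3) o(4) sh[OF X']] assms by blast
    have "compB (compB (actm (idO C) (\<psi> X)) (\<phi> (act B X))) (actm (idO (tensO A B)) \<xi>)
        = compB (compB (actm (idO C) (\<psi> X)) (\<phi> (act B X))) (actm (idO A) (actm (idO B) \<xi>))"
      using aid_tens assms X X' xi by simp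
    also have "\<dots> = compB (actm (idO C) (\<psi> X)) (compB (\<phi> (act B X)) (actm (idO A) (actm (idO B) \<xi>)))"
      using B_assoc[OF o(8) o(5) o(6) o(7) hAB ph[OF o(1)] pX] by simp
    also have "\<dots> = compB (actm (idO C) (\<psi> X)) (compB (actm (idO C) (actm (idO B) \<xi>)) (\<phi> (act B X')))"
      using pn[OF o(1) o(3) hB] by simp
    also have "\<dots> = compB (compB (actm (idO C) (\<psi> X)) (actm (idO C) (actm (idO B) \<xi>))) (\<phi> (act B X'))"
      using B_assoc[OF o(8) o(9) o(6) o(7) ph[OF o(3)] hCB pX] by simp
    also have "\<dots> = compB (actm (idO C) (compB (\<psi> X) (actm (idO B) \<xi>))) (\<phi> (act B X'))"
      using aid_comp[OF _ o(3) o(1) o(2) hB sh[OF X]] assms by simp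
    also have "\<dots> = compB (actm (idO C) (compB (actm (idO D) \<xi>) (\<psi> X'))) (\<phi> (act B X'))"
      using sn[OF X X' xi] by simp
    also have "\<dots> = compB (compB (actm (idO C) (actm (idO D) \<xi>)) (actm (idO C) (\<psi> X'))) (\<phi> (act B X'))"
      using aid_comp[OF _ o(3) o(4) o(2) sh[OF X'] hD] assms by simp
    also have "\<dots> = compB (actm (idO C) (actm (idO D) \<xi>)) (compB (actm (idO C) (\<psi> X')) (\<phi> (act B X')))"
      using B_assoc[OF o(8) o(9) o(10) o(7) ph[OF o(3)] pX' hCD] by simp
    also have "\<dots> = compB (actm (idO (tensO C D)) \<xi>) (compB (actm (idO C) (\<psi> X')) (\<phi> (act B X')))"
      using aid_tens assms X X' xi by simp
    finally show "compB (if X \<in> ObB then compB (actm (idO C) (\<psi> X)) (\<phi> (act B X)) else undefined)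
          (actm (idO (tensO A B)) \<xi>) =
         compB (actm (idO (tensO C D)) \<xi>)
          (if X' \<in> ObB then compB (actm (idO C) (\<psi> X')) (\<phi> (act B X')) else undefined)"
      using X X' by simp
  qed simp
qed

lemma bar_tens_id:
  assumes "A \<in> ObO" "B \<in> ObO"
  shows "barTens ObB compB idO tensO act actm (barId ObB idB act A) (barId ObB idB act B)
       = barId ObB idB act (tensO A B)"
proof -
  have e: "(\<lambda>X. if X \<in> ObB then compB (actm (idO A) (if X \<in> ObB then idB (act B X) else undefined))
        (if act B X \<in> ObB then idB (act A (act B X)) else undefined) else undefined)
     = (\<lambda>X. if X \<in> ObB then idB (act (tensO A B) X) else undefined)"
  proof
    fix X show "(if X \<in> ObB then compB (actm (idO A) (if X \<in> ObB then idB (act B X) else undefined))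
        (if act B X \<in> ObB then idB (act A (act B X)) else undefined) else undefined)
     = (if X \<in> ObB then idB (act (tensO A B) X) else undefined)"
    proof (cases "X \<in> ObB")
      case True
      have o: "act B X \<in> ObB" "act A (act B X) \<in> ObB" using act_ob assms True by auto
      show ?thesis using True o actm_id[OF assms(1) o(1)] B_idL[OF o(2) o(2) B_id[OF o(2)]]
          act_tens[OF assms True] by simp
    qed simp
  qed
  show ?thesis unfolding barId_def barTens_def prod.case e ..
qed

lemma bar_interchange:
  assumes "A \<in> ObO" "B \<in> ObO" "C \<in> ObO" "D \<in> ObO" "E \<in> ObO" "F \<in> ObO"
    "f \<in> H A C" "f' \<in> H C E" "g \<in> H B D" "g' \<in> H D F"
  shows "barTens ObB compB idO tensO act actm (barComp ObB compB f' f) (barComp ObB compB g' g)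
       = barComp ObB compB (barTens ObB compB idO tensO act actm f' g') (barTens ObB compB idO tensO act actm f g)"
proof -
  obtain \<phi> where f: "f = (A, C, \<phi>)" and ph: "\<And>X. X \<in> ObB \<Longrightarrow> \<phi> X \<in> HomB (act A X) (act C X)"
    using H_elim[OF assms(7)] by metis
  obtain \<phi>' where f': "f' = (C, E, \<phi>')" and ph': "\<And>X. X \<in> ObB \<Longrightarrow> \<phi>' X \<in> HomB (act C X) (act E X)"
    using H_elim[OF assms(8)] by metis
  obtain \<psi> where g: "g = (B, D, \<psi>)" and sh: "\<And>X. X \<in> ObB \<Longrightarrow> \<psi> X \<in> HomB (act B X) (act D X)"
    using H_elim[OF assms(9)] by metis
  obtain \<psi>' where g': "g' = (D, F, \<psi>')" and sh': "\<And>X. X \<in> ObB \<Longrightarrow> \<psi>' X \<in> HomB (act D X) (act F X)"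
    using H_elim[OF assms(10)] by metis
  have e: "(\<lambda>X. if X \<in> ObB then compB (actm (idO E) (if X \<in> ObB then compB (\<psi>' X) (\<psi> X) else undefined))
        (if act B X \<in> ObB then compB (\<phi>' (act B X)) (\<phi> (act B X)) else undefined) else undefined)
     = (\<lambda>X. if X \<in> ObB then compB (if X \<in> ObB then compB (actm (idO E) (\<psi>' X)) (\<phi>' (act D X)) else undefined)
        (if X \<in> ObB then compB (actm (idO C) (\<psi> X)) (\<phi> (act B X)) else undefined) else undefined)"
  proof
    fix X show "(if X \<in> ObB then compB (actm (idO E) (if X \<in> ObB then compB (\<psi>' X) (\<psi> X) else undefined))
        (if act B X \<in> ObB then compB (\<phi>' (act B X)) (\<phi> (act B X)) else undefined) else undefined)
     = (if X \<in> ObB then compB (if X \<in> ObB then compB (actm (idO E) (\<psi>' X)) (\<phi>' (act D X)) else undefined)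
        (if X \<in> ObB then compB (actm (idO C) (\<psi> X)) (\<phi> (act B X)) else undefined) else undefined)"
    proof (cases "X \<in> ObB")
      case True
      note X = True
      have o: "act B X \<in> ObB" "act D X \<in> ObB" "act F X \<in> ObB"
        "act A (act B X) \<in> ObB" "act C (act B X) \<in> ObB" "act E (act B X) \<in> ObB"
        "act C (act D X) \<in> ObB" "act E (act D X) \<in> ObB" "act E (act F X) \<in> ObB"
        using act_ob assms X by auto
      have eg: "actm (idO E) (\<psi> X) \<in> HomB (act E (act B X)) (act E (act D X))"
        using aid_hom[OF _ o(1) o(2) sh[OF X]] assms by blast
      have eg': "actm (idO E) (\<psi>' X) \<in> HomB (act E (act D X)) (act E (act F X))"
        using aid_hom[OF _ o(2) o(3) sh'[OF X]] assms by blast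
      have cg: "actm (idO C) (\<psi> X) \<in> HomB (act C (act B X)) (act C (act D X))"
        using aid_hom[OF _ o(1) o(2) sh[OF X]] assms by blast
      have fB: "\<phi> (act B X) \<in> HomB (act A (act B X)) (act C (act B X))" using ph o by blast
      have f'B: "\<phi>' (act B X) \<in> HomB (act C (act B X)) (act E (act B X))" using ph' o by blast
      have f'D: "\<phi>' (act D X) \<in> HomB (act C (act D X)) (act E (act D X))" using ph' o by blast
      have ff: "compB (\<phi>' (act B X)) (\<phi> (act B X)) \<in> HomB (act A (act B X)) (act E (act B X))"
        using B_comp[OF o(4) o(5) o(6) fB f'B] .
      have nat: "compB (actm (idO E) (\<psi> X)) (\<phi>' (act B X)) = compB (\<phi>' (act D X)) (actm (idO C) (\<psi> X))"
        using part1[of C B E D \<phi>' \<psi> X] assms f' g X by simp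
      have "compB (actm (idO E) (compB (\<psi>' X) (\<psi> X))) (compB (\<phi>' (act B X)) (\<phi> (act B X)))
          = compB (compB (actm (idO E) (\<psi>' X)) (actm (idO E) (\<psi> X))) (compB (\<phi>' (act B X)) (\<phi> (act B X)))"
        using aid_comp[OF _ o(1) o(2) o(3) sh[OF X] sh'[OF X]] assms by simp
      also have "\<dots> = compB (actm (idO E) (\<psi>' X)) (compB (actm (idO E) (\<psi> X)) (compB (\<phi>' (act B X)) (\<phi> (act B X))))"
        using B_assoc[OF o(4) o(6) o(8) o(9) ff eg eg'] by simp
      also have "\<dots> = compB (actm (idO E) (\<psi>' X)) (compB (compB (actm (idO E) (\<psi> X)) (\<phi>' (act B X))) (\<phi> (act B X)))"
        using B_assoc[OF o(4) o(5) o(6) o(8) fB f'B eg] by simp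
      also have "\<dots> = compB (actm (idO E) (\<psi>' X)) (compB (compB (\<phi>' (act D X)) (actm (idO C) (\<psi> X))) (\<phi> (act B X)))"
        using nat by simp
      also have "\<dots> = compB (actm (idO E) (\<psi>' X)) (compB (\<phi>' (act D X)) (compB (actm (idO C) (\<psi> X)) (\<phi> (act B X))))"
        using B_assoc[OF o(4) o(5) o(7) o(8) fB cg f'D] by simp
      also have "\<dots> = compB (compB (actm (idO E) (\<psi>' X)) (\<phi>' (act D X))) (compB (actm (idO C) (\<psi> X)) (\<phi> (act B X)))"
        using B_assoc[OF o(4) o(7) o(8) o(9) B_comp[OF o(4) o(5) o(7) fB cg] f'D eg'] by simp
      finally show ?thesis using X o by simp
    qed simp
  qed
  show ?thesis unfolding f f' g g' barComp_def barTens_def prod.case prod.sel e ..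
qed

lemma bar_tens_assoc:
  assumes "A \<in> ObO" "A' \<in> ObO" "B \<in> ObO" "B' \<in> ObO" "C \<in> ObO" "C' \<in> ObO"
    "f \<in> H A A'" "g \<in> H B B'" "h \<in> H C C'"
  shows "barTens ObB compB idO tensO act actm (barTens ObB compB idO tensO act actm f g) h
       = barTens ObB compB idO tensO act actm f (barTens ObB compB idO tensO act actm g h)"
proof -
  obtain \<phi> where f: "f = (A, A', \<phi>)" and ph: "\<And>X. X \<in> ObB \<Longrightarrow> \<phi> X \<in> HomB (act A X) (act A' X)"
    using H_elim[OF assms(7)] by metis
  obtain \<psi> where g: "g = (B, B', \<psi>)" and sh: "\<And>X. X \<in> ObB \<Longrightarrow> \<psi> X \<in> HomB (act B X) (act B' X)"
    using H_elim[OF assms(8)] by metis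
  obtain \<chi> where h: "h = (C, C', \<chi>)" and ch: "\<And>X. X \<in> ObB \<Longrightarrow> \<chi> X \<in> HomB (act C X) (act C' X)"
    using H_elim[OF assms(9)] by metis
  have e: "(\<lambda>X. if X \<in> ObB then compB (actm (idO (tensO A' B')) (\<chi> X))
        (if act C X \<in> ObB then compB (actm (idO A') (\<psi> (act C X))) (\<phi> (act B (act C X))) else undefined) else undefined)
     = (\<lambda>X. if X \<in> ObB then compB (actm (idO A') (if X \<in> ObB then compB (actm (idO B') (\<chi> X)) (\<psi> (act C X)) else undefined))
        (\<phi> (act (tensO B C) X)) else undefined)"
  proof
    fix X show "(if X \<in> ObB then compB (actm (idO (tensO A' B')) (\<chi> X))
        (if act C X \<in> ObB then compB (actm (idO A') (\<psi> (act C X))) (\<phi> (act B (act C X))) else undefined) else undefined)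
     = (if X \<in> ObB then compB (actm (idO A') (if X \<in> ObB then compB (actm (idO B') (\<chi> X)) (\<psi> (act C X)) else undefined))
        (\<phi> (act (tensO B C) X)) else undefined)"
    proof (cases "X \<in> ObB")
      case True
      note X = True
      have o: "act C X \<in> ObB" "act C' X \<in> ObB" "act B (act C X) \<in> ObB" "act B' (act C X) \<in> ObB"
        "act B' (act C' X) \<in> ObB" "act A (act B (act C X)) \<in> ObB" "act A' (act B (act C X)) \<in> ObB"
        "act A' (act B' (act C X)) \<in> ObB" "act A' (act B' (act C' X)) \<in> ObB"
        using act_ob assms X by auto
      have bc: "actm (idO B') (\<chi> X) \<in> HomB (act B' (act C X)) (act B' (act C' X))"
        using aid_hom[OF _ o(1) o(2) ch[OF X]] assms by blast
      have abc: "actm (idO A') (actm (idO B') (\<chi> X)) \<in> HomB (act A' (act B' (act C X))) (act A' (act B' (act C' X)))"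
        using aid_hom[OF _ o(4) o(5) bc] assms by blast
      have ag: "actm (idO A') (\<psi> (act C X)) \<in> HomB (act A' (act B (act C X))) (act A' (act B' (act C X)))"
        using aid_hom[OF _ o(3) o(4) sh[OF o(1)]] assms by blast
      have fB: "\<phi> (act B (act C X)) \<in> HomB (act A (act B (act C X))) (act A' (act B (act C X)))"
        using ph o by blast
      have "compB (actm (idO (tensO A' B')) (\<chi> X)) (compB (actm (idO A') (\<psi> (act C X))) (\<phi> (act B (act C X))))
         = compB (actm (idO A') (actm (idO B') (\<chi> X))) (compB (actm (idO A') (\<psi> (act C X))) (\<phi> (act B (act C X))))"
        using aid_tens[OF assms(2) assms(4) o(1) o(2) ch[OF X]] by simp
      also have "\<dots> = compB (compB (actm (idO A') (actm (idO B') (\<chi> X))) (actm (idO A') (\<psi> (act C X)))) (\<phi> (act B (act C X)))"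
        using B_assoc[OF o(6) o(7) o(8) o(9) fB ag abc] by simp
      also have "\<dots> = compB (actm (idO A') (compB (actm (idO B') (\<chi> X)) (\<psi> (act C X)))) (\<phi> (act B (act C X)))"
        using aid_comp[OF _ o(3) o(4) o(5) sh[OF o(1)] bc] assms by simp
      finally show ?thesis using X o act_tens[OF assms(3) assms(5) X] by simp
    qed simp
  qed
  show ?thesis unfolding f g h barTens_def prod.case O_assoc_ob[OF assms(1,3,5)] O_assoc_ob[OF assms(2,4,6)] e ..
qed

lemma bar_unitL:
  assumes "A \<in> ObO" "B \<in> ObO" "f \<in> H A B"
  shows "barTens ObB compB idO tensO act actm (barId ObB idB act I) f = f"
proof -
  obtain \<phi> where f: "f = (A, B, \<phi>)" and ph: "\<And>X. X \<in> ObB \<Longrightarrow> \<phi> X \<in> HomB (act A X) (act B X)"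
    and pu: "\<And>X. X \<notin> ObB \<Longrightarrow> \<phi> X = undefined"
    using H_elim[OF assms(3)] by metis
  have e: "(\<lambda>X. if X \<in> ObB then compB (actm (idO I) (\<phi> X))
     (if act A X \<in> ObB then idB (act I (act A X)) else undefined) else undefined) = \<phi>"
  proof
    fix X show "(if X \<in> ObB then compB (actm (idO I) (\<phi> X))
     (if act A X \<in> ObB then idB (act I (act A X)) else undefined) else undefined) = \<phi> X"
    proof (cases "X \<in> ObB")
      case True
      have o: "act A X \<in> ObB" "act B X \<in> ObB" using act_ob assms True by auto
      show ?thesis using True o actm_I[OF o ph[OF True]] act_I[OF o(1)] B_idR[OF o ph[OF True]] by simp
    qed (simp add: pu)
  qed
  show ?thesis unfolding f barId_def barTens_def prod.case O_unitL[OF assms(1)] O_unitL[OF assms(2)] e ..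
qed

lemma bar_unitR:
  assumes "A \<in> ObO" "B \<in> ObO" "f \<in> H A B"
  shows "barTens ObB compB idO tensO act actm f (barId ObB idB act I) = f"
proof -
  obtain \<phi> where f: "f = (A, B, \<phi>)" and ph: "\<And>X. X \<in> ObB \<Longrightarrow> \<phi> X \<in> HomB (act A X) (act B X)"
    and pu: "\<And>X. X \<notin> ObB \<Longrightarrow> \<phi> X = undefined"
    using H_elim[OF assms(3)] by metis
  have e: "(\<lambda>X. if X \<in> ObB then compB (actm (idO B) (if X \<in> ObB then idB (act I X) else undefined))
     (\<phi> (act I X)) else undefined) = \<phi>"
  proof
    fix X show "(if X \<in> ObB then compB (actm (idO B) (if X \<in> ObB then idB (act I X) else undefined))
     (\<phi> (act I X)) else undefined) = \<phi> X"
    proof (cases "X \<in> ObB")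
      case True
      have o: "act A X \<in> ObB" "act B X \<in> ObB" using act_ob assms True by auto
      show ?thesis using True o act_I[OF True] actm_id[OF assms(2) True] B_idL[OF o ph[OF True]] by simp
    qed (simp add: pu)
  qed
  show ?thesis unfolding f barId_def barTens_def prod.case O_unitR[OF assms(1)] O_unitR[OF assms(2)] e ..
qed

lemma main:
  shows "(\<forall>A\<in>ObO. \<forall>B\<in>ObO. \<forall>C\<in>ObO. \<forall>D\<in>ObO. \<forall>\<phi> \<psi>.
            (A, C, \<phi>) \<in> barHom ObB HomB compB idO act actm A C \<longrightarrow>
            (B, D, \<psi>) \<in> barHom ObB HomB compB idO act actm B D \<longrightarrow>
            (\<forall>X\<in>ObB. compB (actm (idO C) (\<psi> X)) (\<phi> (act B X))
                     = compB (\<phi> (act D X)) (actm (idO A) (\<psi> X))))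
       \<and> strict_monoidal ObO (barHom ObB HomB compB idO act actm) (barComp ObB compB)
           (barId ObB idB act) tensO (barTens ObB compB idO tensO act actm) I"
proof (intro conjI)
  show "\<forall>A\<in>ObO. \<forall>B\<in>ObO. \<forall>C\<in>ObO. \<forall>D\<in>ObO. \<forall>\<phi> \<psi>.
            (A, C, \<phi>) \<in> barHom ObB HomB compB idO act actm A C \<longrightarrow>
            (B, D, \<psi>) \<in> barHom ObB HomB compB idO act actm B D \<longrightarrow>
            (\<forall>X\<in>ObB. compB (actm (idO C) (\<psi> X)) (\<phi> (act B X))
                     = compB (\<phi> (act D X)) (actm (idO A) (\<psi> X)))"
    using part1 by blast
  show "strict_monoidal ObO (barHom ObB HomB compB idO act actm) (barComp ObB compB)
           (barId ObB idB act) tensO (barTens ObB compB idO tensO act actm) I"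
    unfolding strict_monoidal_def category_def
    by (intro conjI ballI)
      (assumption | rule I_ob O_tens_ob bar_id_hom bar_comp_hom bar_idR bar_idL bar_assoc
        bar_tens_hom bar_tens_id bar_interchange O_assoc_ob O_unitL O_unitR bar_tens_assoc
        bar_unitL bar_unitR)+
qed

end

theorem proposition4p15:
  fixes ObO :: "'o set" and HomO :: "'o \<Rightarrow> 'o \<Rightarrow> 'm set" and compO :: "'m \<Rightarrow> 'm \<Rightarrow> 'm"
    and idO :: "'o \<Rightarrow> 'm" and tensO :: "'o \<Rightarrow> 'o \<Rightarrow> 'o" and tensmO :: "'m \<Rightarrow> 'm \<Rightarrow> 'm"
    and I :: 'o
    and ObB :: "'b set" and HomB :: "'b \<Rightarrow> 'b \<Rightarrow> 'n set" and compB :: "'n \<Rightarrow> 'n \<Rightarrow> 'n"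
    and idB :: "'b \<Rightarrow> 'n" and act :: "'o \<Rightarrow> 'b \<Rightarrow> 'b" and actm :: "'m \<Rightarrow> 'n \<Rightarrow> 'n"
  assumes "strict_left_module ObO HomO compO idO tensO tensmO I ObB HomB compB idB act actm"
  shows "(\<forall>A\<in>ObO. \<forall>B\<in>ObO. \<forall>C\<in>ObO. \<forall>D\<in>ObO. \<forall>\<phi> \<psi>.
            (A, C, \<phi>) \<in> barHom ObB HomB compB idO act actm A C \<longrightarrow>
            (B, D, \<psi>) \<in> barHom ObB HomB compB idO act actm B D \<longrightarrow>
            (\<forall>X\<in>ObB. compB (actm (idO C) (\<psi> X)) (\<phi> (act B X))
                     = compB (\<phi> (act D X)) (actm (idO A) (\<psi> X))))
       \<and> strict_monoidal ObO (barHom ObB HomB compB idO act actm) (barComp ObB compB)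
           (barId ObB idB act) tensO (barTens ObB compB idO tensO act actm) I"
  using main[OF assms] .

end
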